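(* Let $\mu>0$, let $V^{*}_{\mu}$ be the fixed point of $\mathcal{B}_{\mu}$ and $V^{*}$ the fixed point of $\mathcal{B}$. Then $$\|V^{*}_{\mu}-V^{*}\|_{\infty}\le\frac{\mu\cdot\max\{|1-\mathbf{C}|,1\}}{1-\gamma}.$$
   Context: Markov decision process with state space $\mathcal{S}$, action space $\mathcal{A}\subseteq\mathbb{R}$, transition kernel $\mathbf{P}$, bounded reward $R(s',s,a)$, discount $\gamma\in[0,1)$. Standing assumption: all policies are conditional densities on $\mathcal{A}$ (w.r.t. Lebesgue measure) bounded by the constant $\mathbf{C}$; this class is $\Pi_{\mathbf{C}}$. For bounded $V$, $Q_V(s,a)=\mathbb{E}_{S'\sim\mathbf{P}(\cdot\mid s,a)}[R(S',s,a)+\gamma V(S')]$, $\mathcal{B}V(s)=\sup_{\pi\in\Pi_{\mathbf{C}}}\int_{\mathcal{A}}Q_V(s,a)\pi(a\mid s)\,da$, and $\mathcal{B}_{\mu}V(s)=\sup_{\pi\in\Pi_{\mathbf{C}}}\int_{\mathcal{A}}[Q_V(s,a)\pi(a\mid s)+\mu(\pi(a\mid s)-\pi(a\mid s)^2)]\,da$. *)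

theory Defs
  imports "HOL-Probability.Probability"
begin

definition dens_C :: "real set \<Rightarrow> real \<Rightarrow> (real \<Rightarrow> real) set" where
  "dens_C A C = {p. p \<in> borel_measurable lborel \<and> (\<forall>a\<in>A. 0 \<le> p a \<and> p a \<le> C)
                   \<and> set_integrable lborel A p \<and> (LINT a:A|lborel. p a) = 1}"

definition Pol :: "'s measure \<Rightarrow> real set \<Rightarrow> real \<Rightarrow> ('s \<Rightarrow> real \<Rightarrow> real) set" where
  "Pol M A C = {\<pi>. \<forall>s\<in>space M. \<pi> s \<in> dens_C A C}"

definition Qfun :: "('s \<Rightarrow> real \<Rightarrow> 's measure) \<Rightarrow> ('s \<Rightarrow> 's \<Rightarrow> real \<Rightarrow> real) \<Rightarrow> real
                     \<Rightarrow> ('s \<Rightarrow> real) \<Rightarrow> 's \<Rightarrow> real \<Rightarrow> real" where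
  "Qfun P R \<gamma> V s a = (\<integral>s'. R s' s a + \<gamma> * V s' \<partial>(P s a))"

definition Bop :: "'s measure \<Rightarrow> real set \<Rightarrow> real \<Rightarrow> ('s \<Rightarrow> real \<Rightarrow> 's measure)
                    \<Rightarrow> ('s \<Rightarrow> 's \<Rightarrow> real \<Rightarrow> real) \<Rightarrow> real \<Rightarrow> ('s \<Rightarrow> real) \<Rightarrow> 's \<Rightarrow> real" where
  "Bop M A C P R \<gamma> V s =
     (SUP \<pi>\<in>Pol M A C. LINT a:A|lborel. Qfun P R \<gamma> V s a * \<pi> s a)"

definition Bmu :: "'s measure \<Rightarrow> real set \<Rightarrow> real \<Rightarrow> ('s \<Rightarrow> real \<Rightarrow> 's measure)
                    \<Rightarrow> ('s \<Rightarrow> 's \<Rightarrow> real \<Rightarrow> real) \<Rightarrow> real \<Rightarrow> real \<Rightarrow> ('s \<Rightarrow> real) \<Rightarrow> 's \<Rightarrow> real" where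
  "Bmu M A C P R \<gamma> \<mu> V s =
     (SUP \<pi>\<in>Pol M A C. LINT a:A|lborel.
        Qfun P R \<gamma> V s a * \<pi> s a + \<mu> * (\<pi> s a - (\<pi> s a)\<^sup>2))"

end

theory Submission
  imports Defs
begin

lemma integral_kernel_meas:
  fixes f :: "'a \<Rightarrow> 'b \<Rightarrow> real"
  assumes f[measurable]: "(\<lambda>(x,y). f x y) \<in> borel_measurable (N \<Otimes>\<^sub>M M)"
    and L: "L \<in> N \<rightarrow>\<^sub>M prob_algebra M"
    and int: "\<forall>x\<in>space N. integrable (L x) (f x)"
  shows "(\<lambda>x. integral\<^sup>L (L x) (f x)) \<in> borel_measurable N"
proof -
  have L'[measurable]: "L \<in> N \<rightarrow>\<^sub>M subprob_algebra M" using L by (rule measurable_prob_algebraD)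
  have g1: "(\<lambda>(x,y). ennreal (f x y)) \<in> borel_measurable (N \<Otimes>\<^sub>M M)"
  proof -
    have "(\<lambda>p. ennreal ((\<lambda>(x,y). f x y) p)) \<in> borel_measurable (N \<Otimes>\<^sub>M M)" by measurable
    then show ?thesis by (simp add: case_prod_beta')
  qed
  have g2: "(\<lambda>(x,y). ennreal (- f x y)) \<in> borel_measurable (N \<Otimes>\<^sub>M M)"
  proof -
    have "(\<lambda>p. ennreal (- (\<lambda>(x,y). f x y) p)) \<in> borel_measurable (N \<Otimes>\<^sub>M M)" by measurable
    then show ?thesis by (simp add: case_prod_beta')
  qed
  have m1: "(\<lambda>x. \<integral>\<^sup>+y. ennreal (f x y) \<partial>L x) \<in> borel_measurable N"
    by (rule nn_integral_measurable_subprob_algebra2[where N=M, OF g1 L'])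
  have m2: "(\<lambda>x. \<integral>\<^sup>+y. ennreal (- f x y) \<partial>L x) \<in> borel_measurable N"
    by (rule nn_integral_measurable_subprob_algebra2[where N=M, OF g2 L'])
  have "(\<lambda>x. enn2real (\<integral>\<^sup>+y. ennreal (f x y) \<partial>L x) - enn2real (\<integral>\<^sup>+y. ennreal (- f x y) \<partial>L x)) \<in> borel_measurable N"
    using m1 m2 by measurable
  then show ?thesis
    by (rule measurable_cong[THEN iffD1, rotated]) (use int in \<open>simp add: real_lebesgue_integral_def\<close>)
qed
lemma prob_bound_int:
  fixes f :: "'a \<Rightarrow> real"
  assumes N: "prob_space N" and fm: "f \<in> borel_measurable N"
    and b: "\<forall>x\<in>space N. \<bar>f x\<bar> \<le> c"
  shows "integrable N f" "\<bar>integral\<^sup>L N f\<bar> \<le> c"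
proof -
  interpret prob_space N by (rule N)
  show i: "integrable N f"
    by (rule integrable_const_bound[where B=c]) (use b fm in auto)
  have "\<bar>integral\<^sup>L N f\<bar> \<le> integral\<^sup>L N (\<lambda>x. \<bar>f x\<bar>)"
    using integral_norm_bound[of N f] by simp
  also have "\<dots> \<le> integral\<^sup>L N (\<lambda>x. c)"
    by (rule integral_mono) (use i b in auto)
  also have "\<dots> = c" by (simp add: prob_space)
  finally show "\<bar>integral\<^sup>L N f\<bar> \<le> c" .
qed

lemma Q_facts:
  fixes R :: "'s \<Rightarrow> 's \<Rightarrow> real \<Rightarrow> real"
  assumes A_meas: "A \<in> sets lborel"
  and s: "s \<in> space M"
  and kernel: "(\<lambda>a. P s a) \<in> restrict_space lborel A \<rightarrow>\<^sub>M prob_algebra M"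
  and Rm[measurable]: "(\<lambda>(s', a). R s' s a) \<in> borel_measurable (M \<Otimes>\<^sub>M lborel)"
  and Rb: "\<forall>s'\<in>space M. \<forall>a\<in>A. \<bar>R s' s a\<bar> \<le> K"
  and Vm[measurable]: "V \<in> borel_measurable M" and Vb: "\<forall>s'\<in>space M. \<bar>V s'\<bar> \<le> B"
  and g: "0 \<le> \<gamma>"
  shows "Qfun P R \<gamma> V s \<in> borel_measurable (restrict_space lborel A)"
    and "\<forall>a\<in>A. \<bar>Qfun P R \<gamma> V s a\<bar> \<le> K + \<gamma>*B"
    and "\<forall>a\<in>A. integrable (P s a) (\<lambda>s'. R s' s a + \<gamma> * V s') \<and> prob_space (P s a) \<and> sets (P s a) = sets M"
proof -
  have Pa: "prob_space (P s a) \<and> sets (P s a) = sets M" if a: "a \<in> A" for a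
  proof -
    have "P s a \<in> space (prob_algebra M)"
      using measurable_space[OF kernel, of a] a by (simp add: space_restrict_space)
    then show ?thesis by (simp add: space_prob_algebra)
  qed
  have fa: "(\<lambda>s'. R s' s a + \<gamma> * V s') \<in> borel_measurable M" for a
  proof -
    have "(\<lambda>s'. (\<lambda>(s', a). R s' s a) (s', a) + \<gamma> * V s') \<in> borel_measurable M" by measurable
    then show ?thesis by simp
  qed
  have ib: "integrable (P s a) (\<lambda>s'. R s' s a + \<gamma> * V s') \<and> \<bar>Qfun P R \<gamma> V s a\<bar> \<le> K + \<gamma>*B"
    if a: "a \<in> A" for a
  proof -
    have m: "(\<lambda>s'. R s' s a + \<gamma> * V s') \<in> borel_measurable (P s a)"
      using fa Pa[OF a] measurable_cong_sets by blast
    have sp: "space (P s a) = space M" using Pa[OF a] sets_eq_imp_space_eq by blast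
    have b: "\<forall>x\<in>space (P s a). \<bar>R x s a + \<gamma> * V x\<bar> \<le> K + \<gamma>*B"
    proof
      fix x assume "x \<in> space (P s a)"
      then have x: "x \<in> space M" using sp by simp
      have "\<bar>R x s a + \<gamma> * V x\<bar> \<le> \<bar>R x s a\<bar> + \<gamma> * \<bar>V x\<bar>" using g by (simp add: abs_mult abs_triangle_ineq[THEN order_trans])
      also have "\<dots> \<le> K + \<gamma>*B" using Rb Vb x a g by (intro add_mono mult_left_mono) auto
      finally show "\<bar>R x s a + \<gamma> * V x\<bar> \<le> K + \<gamma>*B" .
    qed
    show ?thesis using prob_bound_int[OF conjunct1[OF Pa[OF a]] m b] by (simp add: Qfun_def)
  qed
  then show "\<forall>a\<in>A. \<bar>Qfun P R \<gamma> V s a\<bar> \<le> K + \<gamma>*B" by blast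
  show "\<forall>a\<in>A. integrable (P s a) (\<lambda>s'. R s' s a + \<gamma> * V s') \<and> prob_space (P s a) \<and> sets (P s a) = sets M"
    using ib Pa by blast
  have jm: "(\<lambda>(a, s'). R s' s a + \<gamma> * V s') \<in> borel_measurable (restrict_space lborel A \<Otimes>\<^sub>M M)"
  proof -
    have id: "(\<lambda>x. x) \<in> restrict_space lborel A \<rightarrow>\<^sub>M lborel"
      by (rule measurable_restrict_space1) simp
    have sw: "(\<lambda>p. (snd p, fst p)) \<in> (restrict_space lborel A \<Otimes>\<^sub>M M) \<rightarrow>\<^sub>M (M \<Otimes>\<^sub>M lborel)"
      by (intro measurable_Pair measurable_snd measurable_compose[OF measurable_fst id])
    have "(\<lambda>p. (\<lambda>(s', a). R s' s a) (snd p, fst p) + \<gamma> * V (snd p)) \<in> borel_measurable (restrict_space lborel A \<Otimes>\<^sub>M M)"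
      by (intro borel_measurable_add borel_measurable_times measurable_compose[OF sw Rm]
            measurable_compose[OF measurable_snd Vm] borel_measurable_const)
    then show ?thesis by (simp add: case_prod_beta')
  qed
  have "(\<lambda>a. integral\<^sup>L (P s a) (\<lambda>s'. R s' s a + \<gamma> * V s')) \<in> borel_measurable (restrict_space lborel A)"
    by (rule integral_kernel_meas[OF jm kernel]) (use ib in \<open>simp add: space_restrict_space\<close>)
  then show "Qfun P R \<gamma> V s \<in> borel_measurable (restrict_space lborel A)"
    by (simp add: Qfun_def[abs_def])
qed

lemma Q_diff:
  fixes R :: "'s \<Rightarrow> 's \<Rightarrow> real \<Rightarrow> real"
  assumes A_meas: "A \<in> sets lborel"
  and s: "s \<in> space M"
  and kernel: "(\<lambda>a. P s a) \<in> restrict_space lborel A \<rightarrow>\<^sub>M prob_algebra M"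
  and Rm: "(\<lambda>(s', a). R s' s a) \<in> borel_measurable (M \<Otimes>\<^sub>M lborel)"
  and Rb: "\<forall>s'\<in>space M. \<forall>a\<in>A. \<bar>R s' s a\<bar> \<le> K"
  and Vm: "V \<in> borel_measurable M" and Vb: "\<forall>s'\<in>space M. \<bar>V s'\<bar> \<le> B"
  and Wm: "W \<in> borel_measurable M" and Wb: "\<forall>s'\<in>space M. \<bar>W s'\<bar> \<le> B'"
  and D: "\<forall>s'\<in>space M. \<bar>V s' - W s'\<bar> \<le> D"
  and g: "0 \<le> \<gamma>"
  shows "\<forall>a\<in>A. \<bar>Qfun P R \<gamma> V s a - Qfun P R \<gamma> W s a\<bar> \<le> \<gamma> * D"
proof
  fix a assume a: "a \<in> A"
  note FV = Q_facts(3)[where P=P and R=R and s=s and V=V, OF A_meas s kernel Rm Rb Vm Vb g, rule_format, OF a]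
  note FW = Q_facts(3)[where P=P and R=R and s=s and V=W, OF A_meas s kernel Rm Rb Wm Wb g, rule_format, OF a]
  have sp: "space (P s a) = space M" using FV sets_eq_imp_space_eq by blast
  have "Qfun P R \<gamma> V s a - Qfun P R \<gamma> W s a
      = integral\<^sup>L (P s a) (\<lambda>s'. (R s' s a + \<gamma> * V s') - (R s' s a + \<gamma> * W s'))"
    unfolding Qfun_def using Bochner_Integration.integral_diff[OF conjunct1[OF FV] conjunct1[OF FW]] by simp
  also have "\<dots> = integral\<^sup>L (P s a) (\<lambda>s'. \<gamma> * (V s' - W s'))"
    by (simp add: algebra_simps)
  finally have eq: "Qfun P R \<gamma> V s a - Qfun P R \<gamma> W s a = integral\<^sup>L (P s a) (\<lambda>s'. \<gamma> * (V s' - W s'))" .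
  have m: "(\<lambda>s'. \<gamma> * (V s' - W s')) \<in> borel_measurable (P s a)"
  proof -
    have sets: "sets (P s a) = sets M" using FV by blast
    have m0: "(\<lambda>s'. \<gamma> * (V s' - W s')) \<in> borel_measurable M" using Vm Wm by measurable
    show ?thesis using m0 sets measurable_cong_sets by blast
  qed
  have b: "\<forall>x\<in>space (P s a). \<bar>\<gamma> * (V x - W x)\<bar> \<le> \<gamma> * D"
    using D g sp by (auto simp: abs_mult intro: mult_left_mono)
  show "\<bar>Qfun P R \<gamma> V s a - Qfun P R \<gamma> W s a\<bar> \<le> \<gamma> * D"
    using prob_bound_int(2)[OF conjunct1[OF conjunct2[OF FV]] m b] eq by simp
qed

lemma dens_int:
  fixes Q p :: "real \<Rightarrow> real"
  assumes A_meas: "A \<in> sets lborel"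
    and Qm: "Q \<in> borel_measurable (restrict_space lborel A)"
    and Qb: "\<forall>a\<in>A. \<bar>Q a\<bar> \<le> c"
    and p: "p \<in> dens_C A C"
  shows "set_integrable lborel A (\<lambda>a. Q a * p a)" "\<bar>LINT a:A|lborel. Q a * p a\<bar> \<le> c"
proof -
  have pm: "p \<in> borel_measurable lborel" and pb: "\<forall>a\<in>A. 0 \<le> p a \<and> p a \<le> C"
    and pi: "set_integrable lborel A p" and p1: "(LINT a:A|lborel. p a) = 1"
    using p by (auto simp: dens_C_def)
  have Qm': "(\<lambda>x. indicator A x *\<^sub>R Q x) \<in> borel_measurable lborel"
    using Qm A_meas by (subst (asm) borel_measurable_restrict_space_iff) auto
  have sb: "set_borel_measurable lborel A (\<lambda>a. Q a * p a)"
  proof -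
    have "(\<lambda>x. (indicator A x *\<^sub>R Q x) * p x) \<in> borel_measurable lborel"
      using Qm' pm by measurable
    then show ?thesis unfolding set_borel_measurable_def by (simp add: mult.assoc)
  qed
  have ci: "set_integrable lborel A (\<lambda>a. c * p a)"
    using pi by (rule set_integrable_mult_right)
  show si: "set_integrable lborel A (\<lambda>a. Q a * p a)"
  proof (rule set_integrable_bound[OF ci sb])
    show "AE x in lborel. x \<in> A \<longrightarrow> norm (Q x * p x) \<le> norm (c * p x)"
    proof (rule AE_I2, rule impI)
      fix x assume x: "x \<in> A"
      have "\<bar>Q x\<bar> * p x \<le> c * p x" using Qb pb x by (intro mult_right_mono) auto
      moreover have "0 \<le> c" using Qb x by (meson abs_ge_zero order_trans)
      ultimately show "norm (Q x * p x) \<le> norm (c * p x)" using pb x by (simp add: abs_mult)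
    qed
  qed
  have "(LINT a:A|lborel. Q a * p a) \<le> (LINT a:A|lborel. c * p a)"
    by (rule set_integral_mono[OF si ci]) (use Qb pb in \<open>auto intro: mult_right_mono simp: abs_le_iff\<close>)
  moreover have "(LINT a:A|lborel. (- c) * p a) \<le> (LINT a:A|lborel. Q a * p a)"
  proof (rule set_integral_mono[OF set_integrable_mult_right[OF pi] si])
    fix x assume x: "x \<in> A"
    have "- c \<le> Q x" using Qb x by (auto simp: abs_le_iff)
    then show "(- c) * p x \<le> Q x * p x" using pb x by (intro mult_right_mono) auto
  qed
  moreover have "(LINT a:A|lborel. c * p a) = c" using p1 by (simp add: set_integral_mult_right)
  moreover have "(LINT a:A|lborel. (- c) * p a) = - c" using p1 set_integral_mult_right[where M=lborel and A=A and f=p and a="-c"] by simp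
  ultimately show "\<bar>LINT a:A|lborel. Q a * p a\<bar> \<le> c" by (simp add: p1 abs_le_iff)
qed


lemma reg_term:
  fixes Q p :: "real \<Rightarrow> real"
  assumes A_meas: "A \<in> sets lborel"
    and p: "p \<in> dens_C A C"
    and Qi: "set_integrable lborel A (\<lambda>a. Q a * p a)"
    and mu: "\<mu> > 0"
  shows "\<bar>(LINT a:A|lborel. Q a * p a + \<mu> * (p a - (p a)\<^sup>2)) - (LINT a:A|lborel. Q a * p a)\<bar>
          \<le> \<mu> * max \<bar>1 - C\<bar> 1"
proof -
  have pm: "p \<in> borel_measurable lborel" and pb: "\<forall>a\<in>A. 0 \<le> p a \<and> p a \<le> C"
    and pi: "set_integrable lborel A p" and p1: "(LINT a:A|lborel. p a) = 1"
    using p by (auto simp: dens_C_def)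
  have ci: "set_integrable lborel A (\<lambda>a. C * p a)"
    using pi by (rule set_integrable_mult_right)
  have sb: "set_borel_measurable lborel A (\<lambda>a. (p a)\<^sup>2)"
    unfolding set_borel_measurable_def using pm A_meas by measurable
  have p2i: "set_integrable lborel A (\<lambda>a. (p a)\<^sup>2)"
  proof (rule set_integrable_bound[OF ci sb])
    show "AE x in lborel. x \<in> A \<longrightarrow> norm ((p x)\<^sup>2) \<le> norm (C * p x)"
    proof (rule AE_I2, rule impI)
      fix x assume x: "x \<in> A"
      have "(p x)\<^sup>2 \<le> C * p x" using pb x by (simp add: power2_eq_square mult_right_mono)
      moreover have "0 \<le> C" using pb x by auto
      ultimately show "norm ((p x)\<^sup>2) \<le> norm (C * p x)" using pb x by (simp add: abs_mult)
    qed
  qed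
  have I2u: "(LINT a:A|lborel. (p a)\<^sup>2) \<le> C"
  proof -
    have "(LINT a:A|lborel. (p a)\<^sup>2) \<le> (LINT a:A|lborel. C * p a)"
      by (rule set_integral_mono[OF p2i ci]) (use pb in \<open>auto simp: power2_eq_square mult_right_mono\<close>)
    also have "\<dots> = C" using p1 by simp
    finally show ?thesis .
  qed
  have I2l: "0 \<le> (LINT a:A|lborel. (p a)\<^sup>2)"
  proof -
    have "(LINT a:A|lborel. 0 * p a) \<le> (LINT a:A|lborel. (p a)\<^sup>2)"
      by (rule set_integral_mono[OF set_integrable_mult_right[OF pi] p2i]) simp
    then show ?thesis by simp
  qed
  have di: "set_integrable lborel A (\<lambda>a. p a - (p a)\<^sup>2)"
    using pi p2i by (rule set_integral_diff(1))
  have mi: "set_integrable lborel A (\<lambda>a. \<mu> * (p a - (p a)\<^sup>2))"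
    using di by (rule set_integrable_mult_right)
  have "(LINT a:A|lborel. Q a * p a + \<mu> * (p a - (p a)\<^sup>2))
       = (LINT a:A|lborel. Q a * p a) + (LINT a:A|lborel. \<mu> * (p a - (p a)\<^sup>2))"
    by (rule set_integral_add(2)[OF Qi mi])
  also have "(LINT a:A|lborel. \<mu> * (p a - (p a)\<^sup>2)) = \<mu> * (1 - (LINT a:A|lborel. (p a)\<^sup>2))"
    using set_integral_diff(2)[OF pi p2i] p1 by simp
  finally have eq: "(LINT a:A|lborel. Q a * p a + \<mu> * (p a - (p a)\<^sup>2)) - (LINT a:A|lborel. Q a * p a)
     = \<mu> * (1 - (LINT a:A|lborel. (p a)\<^sup>2))" by simp
  define I2 where "I2 = (LINT a:A|lborel. (p a)\<^sup>2)"
  have h1: "1 - I2 \<le> max \<bar>1 - C\<bar> 1" using I2l unfolding I2_def by linarith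
  have h2: "- (1 - I2) \<le> max \<bar>1 - C\<bar> 1"
  proof -
    have "- (1 - I2) \<le> - (1 - C)" using I2u unfolding I2_def by linarith
    also have "\<dots> \<le> \<bar>1 - C\<bar>" by (rule abs_ge_minus_self)
    also have "\<dots> \<le> max \<bar>1 - C\<bar> 1" by (rule max.cobounded1)
    finally show ?thesis .
  qed
  have "\<bar>1 - I2\<bar> \<le> max \<bar>1 - C\<bar> 1" using h1 h2 by (simp only: abs_le_iff)
  then have "\<mu> * \<bar>1 - I2\<bar> \<le> \<mu> * max \<bar>1 - C\<bar> 1"
    using mu by (intro mult_left_mono) auto
  moreover have "\<bar>\<mu> * (1 - I2)\<bar> = \<mu> * \<bar>1 - I2\<bar>" using mu by (simp add: abs_mult)
  ultimately show ?thesis unfolding eq I2_def[symmetric] by simp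
qed

lemma SUP_close:
  fixes f g :: "'a \<Rightarrow> real"
  assumes ne: "S \<noteq> {}" and bf: "\<forall>x\<in>S. \<bar>f x\<bar> \<le> b1" and bg: "\<forall>x\<in>S. \<bar>g x\<bar> \<le> b2"
    and d: "\<forall>x\<in>S. \<bar>f x - g x\<bar> \<le> e"
  shows "\<bar>(SUP x\<in>S. f x) - (SUP x\<in>S. g x)\<bar> \<le> e"
proof -
  have bdf: "bdd_above (f ` S)" using bf by (intro bdd_aboveI2[where M=b1]) (auto simp: abs_le_iff)
  have bdg: "bdd_above (g ` S)" using bg by (intro bdd_aboveI2[where M=b2]) (auto simp: abs_le_iff)
  have "(SUP x\<in>S. f x) \<le> (SUP x\<in>S. g x) + e"
  proof (rule cSUP_least[OF ne])
    fix x assume x: "x \<in> S"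
    have "f x \<le> g x + e" using d x by (auto simp: abs_le_iff)
    also have "g x \<le> (SUP x\<in>S. g x)" by (rule cSUP_upper[OF x bdg])
    finally show "f x \<le> (SUP x\<in>S. g x) + e" by simp
  qed
  moreover have "(SUP x\<in>S. g x) \<le> (SUP x\<in>S. f x) + e"
  proof (rule cSUP_least[OF ne])
    fix x assume x: "x \<in> S"
    have "g x \<le> f x + e" using d x by (auto simp: abs_le_iff)
    also have "f x \<le> (SUP x\<in>S. f x)" by (rule cSUP_upper[OF x bdf])
    finally show "g x \<le> (SUP x\<in>S. f x) + e" by simp
  qed
  ultimately show ?thesis by (simp add: abs_le_iff)
qed


theorem propositionS2:
  fixes M :: "'s measure" and A :: "real set" and C \<gamma> \<mu> :: real
    and P :: "'s \<Rightarrow> real \<Rightarrow> 's measure" and R :: "'s \<Rightarrow> 's \<Rightarrow> real \<Rightarrow> real"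
    and Vmu Vstar :: "'s \<Rightarrow> real"
  assumes A_meas: "A \<in> sets lborel"
    and kernel: "\<forall>s\<in>space M. (\<lambda>a. P s a) \<in> measurable (restrict_space lborel A) (prob_algebra M)"
    and R_meas: "\<forall>s\<in>space M. (\<lambda>(s', a). R s' s a) \<in> borel_measurable (M \<Otimes>\<^sub>M lborel)"
    and R_bdd: "\<exists>K. \<forall>s'\<in>space M. \<forall>s\<in>space M. \<forall>a\<in>A. \<bar>R s' s a\<bar> \<le> K"
    and gamma: "0 \<le> \<gamma>" "\<gamma> < 1"
    and mu: "\<mu> > 0"
    and Vmu_meas: "Vmu \<in> borel_measurable M" and Vmu_bdd: "bounded (Vmu ` space M)"
    and Vmu_fix: "\<forall>s\<in>space M. Bmu M A C P R \<gamma> \<mu> Vmu s = Vmu s"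
    and Vstar_meas: "Vstar \<in> borel_measurable M" and Vstar_bdd: "bounded (Vstar ` space M)"
    and Vstar_fix: "\<forall>s\<in>space M. Bop M A C P R \<gamma> Vstar s = Vstar s"
  shows "\<forall>s\<in>space M. \<bar>Vmu s - Vstar s\<bar> \<le> \<mu> * max \<bar>1 - C\<bar> 1 / (1 - \<gamma>)"
  proof -
  obtain K where K: "\<forall>s'\<in>space M. \<forall>s\<in>space M. \<forall>a\<in>A. \<bar>R s' s a\<bar> \<le> K" using R_bdd by blast
  obtain B1 where B1: "\<forall>s\<in>space M. \<bar>Vmu s\<bar> \<le> B1" using Vmu_bdd by (auto simp: bounded_iff)
  obtain B2 where B2: "\<forall>s\<in>space M. \<bar>Vstar s\<bar> \<le> B2" using Vstar_bdd by (auto simp: bounded_iff)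
  define c where "c = max \<bar>1 - C\<bar> 1"
  have c1: "c \<ge> 1" by (simp add: c_def)
  have rhs: "0 \<le> \<mu> * c / (1 - \<gamma>)" using mu c1 gamma by simp
  show ?thesis
  proof (cases "Pol M A C = {}")
    case True
    show ?thesis
    proof
      fix s assume s: "s \<in> space M"
      have "Vmu s = Vstar s" using Vmu_fix Vstar_fix s by (simp add: Bmu_def Bop_def True)
      then show "\<bar>Vmu s - Vstar s\<bar> \<le> \<mu> * max \<bar>1 - C\<bar> 1 / (1 - \<gamma>)" using rhs by (simp add: c_def)
    qed
  next
    case False
    define D where "D = (SUP s\<in>space M. \<bar>Vmu s - Vstar s\<bar>)"
    have bdD: "bdd_above ((\<lambda>s. \<bar>Vmu s - Vstar s\<bar>) ` space M)"
    proof (rule bdd_aboveI2[where M="B1 + B2"])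
      fix s assume "s \<in> space M"
      then show "\<bar>Vmu s - Vstar s\<bar> \<le> B1 + B2" using B1 B2 by (smt (verit))
    qed
    have Dp: "\<forall>s'\<in>space M. \<bar>Vmu s' - Vstar s'\<bar> \<le> D"
      unfolding D_def using bdD by (auto intro: cSUP_upper)
    have key: "\<bar>Vmu s - Vstar s\<bar> \<le> \<mu> * c + \<gamma> * D" if s: "s \<in> space M" for s
    proof -
      have ker: "(\<lambda>a. P s a) \<in> restrict_space lborel A \<rightarrow>\<^sub>M prob_algebra M" using kernel s by blast
      have Rm: "(\<lambda>(s', a). R s' s a) \<in> borel_measurable (M \<Otimes>\<^sub>M lborel)" using R_meas s by blast
      have Rb: "\<forall>s'\<in>space M. \<forall>a\<in>A. \<bar>R s' s a\<bar> \<le> K" using K s by blast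
      note Q1 = Q_facts[where P=P and R=R and s=s and V=Vmu, OF A_meas s ker Rm Rb Vmu_meas B1 gamma(1)]
      note Q2 = Q_facts[where P=P and R=R and s=s and V=Vstar, OF A_meas s ker Rm Rb Vstar_meas B2 gamma(1)]
      note Qd = Q_diff[where P=P and R=R and s=s and V=Vmu and W=Vstar, OF A_meas s ker Rm Rb Vmu_meas B1 Vstar_meas B2 Dp gamma(1)]
      have dens: "\<pi> s \<in> dens_C A C" if "\<pi> \<in> Pol M A C" for \<pi> using that s by (simp add: Pol_def)
      have step1: "\<bar>Bmu M A C P R \<gamma> \<mu> Vmu s - Bop M A C P R \<gamma> Vmu s\<bar> \<le> \<mu> * c"
        unfolding Bmu_def Bop_def
      proof (rule SUP_close[OF False])
        show "\<forall>\<pi>\<in>Pol M A C. \<bar>LINT a:A|lborel. Qfun P R \<gamma> Vmu s a * \<pi> s a\<bar> \<le> K + \<gamma> * B1"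
          using dens_int(2)[OF A_meas Q1(1) Q1(2) dens] by blast
        show "\<forall>\<pi>\<in>Pol M A C. \<bar>(LINT a:A|lborel. Qfun P R \<gamma> Vmu s a * \<pi> s a + \<mu> * (\<pi> s a - (\<pi> s a)\<^sup>2))
                 - (LINT a:A|lborel. Qfun P R \<gamma> Vmu s a * \<pi> s a)\<bar> \<le> \<mu> * c"
        proof
          fix \<pi> assume pi: "\<pi> \<in> Pol M A C"
          show "\<bar>(LINT a:A|lborel. Qfun P R \<gamma> Vmu s a * \<pi> s a + \<mu> * (\<pi> s a - (\<pi> s a)\<^sup>2))
                 - (LINT a:A|lborel. Qfun P R \<gamma> Vmu s a * \<pi> s a)\<bar> \<le> \<mu> * c"
            unfolding c_def using reg_term[OF A_meas dens[OF pi] dens_int(1)[OF A_meas Q1(1) Q1(2) dens[OF pi]] mu] .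
        qed
        show "\<forall>\<pi>\<in>Pol M A C. \<bar>LINT a:A|lborel. Qfun P R \<gamma> Vmu s a * \<pi> s a + \<mu> * (\<pi> s a - (\<pi> s a)\<^sup>2)\<bar>
                 \<le> (K + \<gamma> * B1) + \<mu> * c"
        proof
          fix \<pi> assume pi: "\<pi> \<in> Pol M A C"
          have "\<bar>LINT a:A|lborel. Qfun P R \<gamma> Vmu s a * \<pi> s a\<bar> \<le> K + \<gamma> * B1"
            using dens_int(2)[OF A_meas Q1(1) Q1(2) dens[OF pi]] .
          moreover have "\<bar>(LINT a:A|lborel. Qfun P R \<gamma> Vmu s a * \<pi> s a + \<mu> * (\<pi> s a - (\<pi> s a)\<^sup>2))
                 - (LINT a:A|lborel. Qfun P R \<gamma> Vmu s a * \<pi> s a)\<bar> \<le> \<mu> * c"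
            unfolding c_def using reg_term[OF A_meas dens[OF pi] dens_int(1)[OF A_meas Q1(1) Q1(2) dens[OF pi]] mu] .
          ultimately show "\<bar>LINT a:A|lborel. Qfun P R \<gamma> Vmu s a * \<pi> s a + \<mu> * (\<pi> s a - (\<pi> s a)\<^sup>2)\<bar>
                 \<le> (K + \<gamma> * B1) + \<mu> * c" by linarith
        qed
      qed
      have step2: "\<bar>Bop M A C P R \<gamma> Vmu s - Bop M A C P R \<gamma> Vstar s\<bar> \<le> \<gamma> * D"
        unfolding Bop_def
      proof (rule SUP_close[OF False])
        show "\<forall>\<pi>\<in>Pol M A C. \<bar>LINT a:A|lborel. Qfun P R \<gamma> Vmu s a * \<pi> s a\<bar> \<le> K + \<gamma> * B1"
          using dens_int(2)[OF A_meas Q1(1) Q1(2) dens] by blast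
        show "\<forall>\<pi>\<in>Pol M A C. \<bar>LINT a:A|lborel. Qfun P R \<gamma> Vstar s a * \<pi> s a\<bar> \<le> K + \<gamma> * B2"
          using dens_int(2)[OF A_meas Q2(1) Q2(2) dens] by blast
        show "\<forall>\<pi>\<in>Pol M A C. \<bar>(LINT a:A|lborel. Qfun P R \<gamma> Vmu s a * \<pi> s a) - (LINT a:A|lborel. Qfun P R \<gamma> Vstar s a * \<pi> s a)\<bar> \<le> \<gamma> * D"
        proof
          fix \<pi> assume pi: "\<pi> \<in> Pol M A C"
          have i1: "set_integrable lborel A (\<lambda>a. Qfun P R \<gamma> Vmu s a * \<pi> s a)"
            using dens_int(1)[OF A_meas Q1(1) Q1(2) dens[OF pi]] .
          have i2: "set_integrable lborel A (\<lambda>a. Qfun P R \<gamma> Vstar s a * \<pi> s a)"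
            using dens_int(1)[OF A_meas Q2(1) Q2(2) dens[OF pi]] .
          have mdiff: "(\<lambda>a. Qfun P R \<gamma> Vmu s a - Qfun P R \<gamma> Vstar s a) \<in> borel_measurable (restrict_space lborel A)"
            using Q1(1) Q2(1) by (rule borel_measurable_diff)
          have "(LINT a:A|lborel. Qfun P R \<gamma> Vmu s a * \<pi> s a) - (LINT a:A|lborel. Qfun P R \<gamma> Vstar s a * \<pi> s a)
              = (LINT a:A|lborel. (Qfun P R \<gamma> Vmu s a - Qfun P R \<gamma> Vstar s a) * \<pi> s a)"
            using set_integral_diff(2)[OF i1 i2] by (simp add: left_diff_distrib)
          also have "\<bar>\<dots>\<bar> \<le> \<gamma> * D"
            by (rule dens_int(2)[OF A_meas mdiff Qd dens[OF pi]])
          finally show "\<bar>(LINT a:A|lborel. Qfun P R \<gamma> Vmu s a * \<pi> s a) - (LINT a:A|lborel. Qfun P R \<gamma> Vstar s a * \<pi> s a)\<bar> \<le> \<gamma> * D" .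
        qed
      qed
      have "Vmu s = Bmu M A C P R \<gamma> \<mu> Vmu s" using Vmu_fix s by simp
      moreover have "Vstar s = Bop M A C P R \<gamma> Vstar s" using Vstar_fix s by simp
      ultimately show ?thesis using step1 step2 by linarith
    qed
    show ?thesis
    proof
      fix s assume s: "s \<in> space M"
      define E where "E = \<mu> * c + \<gamma> * D"
      have "(SUP s\<in>space M. \<bar>Vmu s - Vstar s\<bar>) \<le> E"
      proof (rule cSUP_least)
        show "space M \<noteq> {}" using s by blast
        fix x assume "x \<in> space M"
        then show "\<bar>Vmu x - Vstar x\<bar> \<le> E" using key unfolding E_def by blast
      qed
      then have "D \<le> \<mu> * c + \<gamma> * D" unfolding E_def D_def .
      then have "(1 - \<gamma>) * D \<le> \<mu> * c" by (simp add: algebra_simps)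
      then have "D \<le> \<mu> * c / (1 - \<gamma>)" using gamma by (simp add: pos_le_divide_eq mult.commute)
      then have "\<bar>Vmu s - Vstar s\<bar> \<le> \<mu> * c / (1 - \<gamma>)"
        using Dp s by (meson order_trans)
      then show "\<bar>Vmu s - Vstar s\<bar> \<le> \<mu> * max \<bar>1 - C\<bar> 1 / (1 - \<gamma>)"
        unfolding c_def .
    qed
  qed
qed

end
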